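(* Let $k\geq1$, $n\geq2k$, and let $\mathcal{S}$ be an antichain in $\mathcal{F}=\mathcal{F}_{2k}^{[1,n]}$ that contains the set $[1,2]\cup[n-2k+3,n]$. Then $B_{\mathcal{S}}$ is $(k-1)$-neighborly w.r.t. $[n]$.
   Context: Notation: $[m,n]=\{m,\dots,n\}$; $2k$-subsets of $[n]$ are identified with increasing vectors, and $\leq_p$ is the componentwise order. $\mathcal{F}_{2k}^{[1,n]}$ is the set of sets $\{i_1,i_1+1,\dots,i_k,i_k+1\}$ with $1\leq i_1$, $i_k\leq n-1$, $i_j\leq i_{j+1}-2$, ordered by $\leq_p$. $\mathcal{F}(\mathcal{S})$ is the order ideal generated by an antichain $\mathcal{S}$, $B(\mathcal{S})$ the pure complex whose facets are the sets of $\mathcal{F}(\mathcal{S})$, $\mathcal{S}-\mathbf{1}_{2k}=\{x-\mathbf{1}_{2k}: x\in\mathcal{S},\min x>1\}$, and $B_{\mathcal{S}}$ is the complex generated by the facets of $B(\mathcal{S})$ that are not facets of $B(\mathcal{S}-\mathbf{1}_{2k})$. A complex is $i$-neighborly w.r.t. $V$ if every subset of $V$ of size at most $i$ is a face. *)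

theory Defs
  imports Main
begin

text \<open>A $2k$-subset of $[n]$ identified with its increasing vector: the componentwise
order compares the $m$-th smallest elements.\<close>
definition leq_p :: "nat set \<Rightarrow> nat set \<Rightarrow> bool" where
  "leq_p x y \<longleftrightarrow> card x = card y \<and>
     (\<forall>m < card x. sorted_list_of_set x ! m \<le> sorted_list_of_set y ! m)"

text \<open>$\mathcal{F}_{2k}^{[1,n]}$: sets $\{i_1,i_1+1,\dots,i_k,i_k+1\}$ with $1\le i_1$,
$i_k\le n-1$, $i_j\le i_{j+1}-2$ (indices shifted to $0,\dots,k-1$).\<close>
definition Fam :: "nat \<Rightarrow> nat \<Rightarrow> nat set set" where
  "Fam k n = {A. \<exists>i :: nat \<Rightarrow> nat.
      1 \<le> i 0 \<and> i (k - 1) + 1 \<le> n \<and>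
      (\<forall>j. j + 1 < k \<longrightarrow> i j + 2 \<le> i (j + 1)) \<and>
      A = (\<Union>j<k. {i j, i j + 1})}"

definition is_antichain :: "nat set set \<Rightarrow> nat set set \<Rightarrow> bool" where
  "is_antichain P S \<longleftrightarrow> S \<subseteq> P \<and> (\<forall>x\<in>S. \<forall>y\<in>S. leq_p x y \<longrightarrow> x = y)"

definition order_ideal :: "nat set set \<Rightarrow> nat set set \<Rightarrow> nat set set" where
  "order_ideal P S = {x \<in> P. \<exists>s\<in>S. leq_p x s}"

definition generated_complex :: "nat set set \<Rightarrow> nat set set" where
  "generated_complex G = {\<sigma>. \<exists>F\<in>G. \<sigma> \<subseteq> F}"

definition facets :: "nat set set \<Rightarrow> nat set set" where
  "facets K = {F \<in> K. \<forall>G\<in>K. F \<subseteq> G \<longrightarrow> G = F}"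

definition B_cpx :: "nat \<Rightarrow> nat \<Rightarrow> nat set set \<Rightarrow> nat set set" where
  "B_cpx k n S = generated_complex (order_ideal (Fam k n) S)"

definition shift_down :: "nat set set \<Rightarrow> nat set set" where
  "shift_down S = {(\<lambda>a. a - 1) ` x | x. x \<in> S \<and> Min x > 1}"

definition B_sub :: "nat \<Rightarrow> nat \<Rightarrow> nat set set \<Rightarrow> nat set set" where
  "B_sub k n S = generated_complex
     {F \<in> facets (B_cpx k n S). F \<notin> facets (B_cpx k n (shift_down S))}"

definition neighborly :: "nat \<Rightarrow> nat set set \<Rightarrow> nat set \<Rightarrow> bool" where
  "neighborly i K V \<longleftrightarrow> (\<forall>\<sigma>. \<sigma> \<subseteq> V \<and> card \<sigma> \<le> i \<longrightarrow> \<sigma> \<in> K)"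

end

theory Submission imports Defs begin
definition U :: "nat \<Rightarrow> (nat\<Rightarrow>nat) \<Rightarrow> nat set" where "U k i = (\<Union>j<k. {i j, i j + 1})"
definition chn :: "nat \<Rightarrow> (nat\<Rightarrow>nat) \<Rightarrow> bool" where "chn k i \<longleftrightarrow> (\<forall>j. j+1<k \<longrightarrow> i j + 2 \<le> i (j+1))"

lemma chn_mono: assumes "chn k i" "j \<le> j'" "j' < k" shows "i j + 2*(j'-j) \<le> i j'"
  using assms(2,3)
proof (induction j')
  case 0 then show ?case by simp
next
  case (Suc j')
  show ?case
  proof (cases "j = Suc j'")
    case False
    then have "j \<le> j'" using Suc by simp
    with Suc have "i j + 2*(j'-j) \<le> i j'" by simp
    moreover have "i j' + 2 \<le> i (Suc j')" using assms(1) Suc unfolding chn_def by auto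
    ultimately show ?thesis using \<open>j \<le> j'\<close> by (simp add: Suc_diff_le)
  qed simp
qed

definition lst :: "nat \<Rightarrow> (nat\<Rightarrow>nat) \<Rightarrow> nat list" where
  "lst k i = map (\<lambda>m. i (m div 2) + m mod 2) [0..<2*k]"

lemma set_lst: "set (lst k i) = U k i"
proof -
  have "set (lst k i) = (\<lambda>m. i (m div 2) + m mod 2) ` {0..<2*k}" by (simp add: lst_def)
  also have "\<dots> = U k i"
  proof
    show "(\<lambda>m. i (m div 2) + m mod 2) ` {0..<2*k} \<subseteq> U k i"
      proof
      fix x assume "x \<in> (\<lambda>m. i (m div 2) + m mod 2) ` {0..<2*k}"
      then obtain m where m: "m < 2*k" "x = i (m div 2) + m mod 2" by auto
      then have "m div 2 < k" by auto
      moreover have "m mod 2 = 0 \<or> m mod 2 = 1" by auto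
      ultimately show "x \<in> U k i" using m unfolding U_def by auto
    qed
    show "U k i \<subseteq> (\<lambda>m. i (m div 2) + m mod 2) ` {0..<2*k}"
    proof
      fix x assume "x \<in> U k i"
      then obtain j where j: "j < k" "x = i j \<or> x = i j + 1" unfolding U_def by auto
      from j(2) show "x \<in> (\<lambda>m. i (m div 2) + m mod 2) ` {0..<2*k}"
      proof
        assume "x = i j" then show ?thesis by (intro image_eqI[of _ _ "2*j"]) (use j in auto)
      next
        assume "x = i j + 1" then show ?thesis by (intro image_eqI[of _ _ "2*j+1"]) (use j in auto)
      qed
    qed
  qed
  finally show ?thesis .
qed

lemma sorted_lst: assumes "chn k i" shows "sorted_wrt (<) (lst k i)"
proof -
  have "i (a div 2) + a mod 2 < i (b div 2) + b mod 2" if "a < b" "b < 2*k" for a b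
  proof (cases "a div 2 = b div 2")
    case True then show ?thesis using that proof -
    have "a mod 2 < b mod 2" using div_mult_mod_eq[of a 2] div_mult_mod_eq[of b 2] True that(1) by linarith
    then show ?thesis using True by simp
  qed
  next
    case False
    then have "a div 2 < b div 2" using that by (simp add: div_le_mono order_less_le less_imp_le)
    moreover have "b div 2 < k" using that by auto
    ultimately have "i (a div 2) + 2*(b div 2 - a div 2) \<le> i (b div 2)" using chn_mono[OF assms] by simp
    moreover have "2 \<le> 2*(b div 2 - a div 2)" using \<open>a div 2 < b div 2\<close> by simp
    moreover have "a mod 2 < 2" by simp
    ultimately show ?thesis by linarith
  qed
  then show ?thesis unfolding sorted_wrt_iff_nth_less lst_def by auto
qed

lemma sl_U: assumes "chn k i" shows "sorted_list_of_set (U k i) = lst k i"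
proof -
  have d: "distinct (lst k i)" and so: "sorted (lst k i)"
    using sorted_lst[OF assms] strict_sorted_iff by auto
  show ?thesis unfolding set_lst[symmetric] sorted_list_of_set_sort_remdups
    using d so by (simp add: distinct_remdups_id sorted_sort_id)
qed

lemma card_U: assumes "chn k i" shows "card (U k i) = 2*k"
proof -
  have d: "distinct (lst k i)" using sorted_lst[OF assms] strict_sorted_iff by auto
  show ?thesis unfolding set_lst[symmetric] using distinct_card[OF d] by (simp add: lst_def)
qed

lemma leq_U: assumes "chn k i" "chn k t"
  shows "leq_p (U k i) (U k t) \<longleftrightarrow> (\<forall>j<k. i j \<le> t j)"
proof -
  have "leq_p (U k i) (U k t) \<longleftrightarrow> (\<forall>m<2*k. i (m div 2) + m mod 2 \<le> t (m div 2) + m mod 2)"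
    unfolding leq_p_def card_U[OF assms(1)] card_U[OF assms(2)] sl_U[OF assms(1)] sl_U[OF assms(2)]
    by (simp add: lst_def)
  also have "\<dots> \<longleftrightarrow> (\<forall>j<k. i j \<le> t j)"
  proof
    assume H: "\<forall>m<2*k. i (m div 2) + m mod 2 \<le> t (m div 2) + m mod 2"
    show "\<forall>j<k. i j \<le> t j"
    proof (intro allI impI)
      fix j assume "j < k" then show "i j \<le> t j" using H[rule_format, of "2*j"] by simp
    qed
  next
    assume "\<forall>j<k. i j \<le> t j" then show "\<forall>m<2*k. i (m div 2) + m mod 2 \<le> t (m div 2) + m mod 2"
      by auto
  qed
  finally show ?thesis .
qed

lemma shift_U: assumes "\<forall>j<k. 1 \<le> t j"
  shows "(\<lambda>a. a - 1) ` U k t = U k (\<lambda>j. t j - 1)"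
  using assms unfolding U_def by force

lemma chn_shift: assumes "chn k t" "\<forall>j<k. 1 \<le> t j" shows "chn k (\<lambda>j. t j - 1)"
  unfolding chn_def
proof (intro allI impI)
  fix j assume "j + 1 < k"
  then have "t j + 2 \<le> t (j+1)" "1 \<le> t j" using assms unfolding chn_def by auto
  then show "t j - 1 + 2 \<le> t (j + 1) - 1" by linarith
qed

lemma Fam_iff: "Fam k n = {A. \<exists>i. 1 \<le> i 0 \<and> i (k - 1) + 1 \<le> n \<and> chn k i \<and> A = U k i}"
  unfolding Fam_def U_def chn_def by simp

lemma U_Suc: "U (Suc k) i = {i 0, i 0 + 1} \<union> U k (\<lambda>j. i (Suc j))"
  unfolding U_def by (auto simp: lessThan_Suc_eq_insert_0)

lemma U_Suc2: "U (Suc k) i = U k i \<union> {i k, i k + 1}"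
  unfolding U_def by (auto simp: lessThan_Suc)

lemma finite_U: "finite (U k i)" unfolding U_def by simp

lemma tile: "U m (\<lambda>j. c + 2*j) = {c..<c+2*m}"
proof (induction m)
  case 0 then show ?case by (simp add: U_def)
next
  case (Suc m) then show ?case unfolding U_Suc2 by auto
qed

lemma free_pair: assumes "chn k i" "finite \<sigma>" "card \<sigma> < k"
  shows "\<exists>j<k. i j \<notin> \<sigma> \<and> i j + 1 \<notin> \<sigma>"
proof (rule ccontr)
  assume "\<not> ?thesis"
  then have "\<forall>j\<in>{..<k}. \<exists>y. y \<in> \<sigma> \<and> (y = i j \<or> y = i j + 1)" by auto
  then obtain f where f: "\<forall>j\<in>{..<k}. f j \<in> \<sigma> \<and> (f j = i j \<or> f j = i j + 1)"
    by (metis (mono_tags) bchoice)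
  have lt: "f j < f j'" if "j < j'" "j' < k" for j j'
  proof -
    have "i j + 2*(j'-j) \<le> i j'" using chn_mono[OF assms(1)] that by simp
    moreover have "2 \<le> 2*(j'-j)" using that by simp
    moreover have "j \<in> {..<k}" "j' \<in> {..<k}" using that by auto
    then have "f j \<le> i j + 1" "i j' \<le> f j'" using f by force+
    ultimately show ?thesis by linarith
  qed
  have "inj_on f {..<k}"
  proof (rule inj_onI)
    fix a b assume "a \<in> {..<k}" "b \<in> {..<k}" "f a = f b"
    then show "a = b" using lt[of a b] lt[of b a] by (metis lessThan_iff linorder_neqE_nat less_irrefl)
  qed
  moreover have "f ` {..<k} \<subseteq> \<sigma>" using f by auto
  ultimately have "card {..<k} \<le> card \<sigma>" using card_inj_on_le assms(2) by blast
  then show False using assms(3) by simp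
qed

lemma cover: "\<sigma> \<subseteq> {a..n} \<Longrightarrow> card \<sigma> \<le> k \<Longrightarrow> a + 2*k \<le> n + 1 \<Longrightarrow>
   \<exists>i. chn k i \<and> (\<forall>j<k. a \<le> i j \<and> i j + 1 \<le> n) \<and> \<sigma> \<subseteq> U k i"
proof (induction k arbitrary: a \<sigma>)
  case 0
  then have "finite \<sigma>" using finite_subset by blast
  with 0 have "\<sigma> = {}" by simp
  then show ?case by (auto simp: chn_def)
next
  case (Suc k)
  show ?case
  proof (cases "\<sigma> \<subseteq> {n-2*k-1..n}")
    case True
    define i where "i j = n - 2*k - 1 + 2*j" for j
    have "chn (Suc k) i" unfolding chn_def i_def by simp
    moreover have "\<forall>j<Suc k. a \<le> i j \<and> i j + 1 \<le> n" using Suc.prems(3) unfolding i_def by auto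
    moreover have "U (Suc k) i = {n-2*k-1..<n+1}"
      using tile[of "Suc k" "n-2*k-1"] Suc.prems(3) unfolding i_def by simp
    ultimately show ?thesis using True by (intro exI[of _ i]) (auto simp: atLeastLessThanSuc_atLeastAtMost)
  next
    case False
    have "\<exists>y\<in>\<sigma>. y < n - 2*k - 1" using False Suc.prems(1) unfolding subset_iff atLeastAtMost_iff by (meson not_le)
    then obtain y where y: "y \<in> \<sigma>" "y < n - 2*k - 1" by auto
    have fin: "finite \<sigma>" using Suc.prems(1) finite_subset by blast
    define x where "x = Min \<sigma>"
    have x: "x \<in> \<sigma>" "x \<le> y" "\<forall>z\<in>\<sigma>. x \<le> z" using fin y unfolding x_def by (auto intro: Min_in)
    have xa: "a \<le> x" using x Suc.prems(1) by auto
    define \<sigma>' where "\<sigma>' = \<sigma> - {x, x+1}"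
    have s1: "\<sigma>' \<subseteq> {x+2..n}" using x Suc.prems(1) unfolding \<sigma>'_def by fastforce
    have "card \<sigma>' \<le> card (\<sigma> - {x})" unfolding \<sigma>'_def using fin by (intro card_mono) auto
    also have "\<dots> = card \<sigma> - 1" using x fin by simp
    finally have s2: "card \<sigma>' \<le> k" using Suc.prems(2) by simp
    have s3: "x + 2 + 2*k \<le> n + 1" using x(2) y(2) by linarith
    obtain c where c: "chn k c" "\<forall>j<k. x+2 \<le> c j \<and> c j + 1 \<le> n" "\<sigma>' \<subseteq> U k c"
      using Suc.IH[OF s1 s2 s3] by blast
    define i where "i j = (if j = 0 then x else c (j - 1))" for j
    have "chn (Suc k) i" unfolding chn_def
    proof (intro allI impI)
      fix j assume j: "j + 1 < Suc k"
      show "i j + 2 \<le> i (j+1)"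
      proof (cases j)
        case 0 then show ?thesis using c(2) j unfolding i_def by auto
      next
        case (Suc j') then show ?thesis using c(1) j unfolding i_def chn_def by auto
      qed
    qed
    moreover have "\<forall>j<Suc k. a \<le> i j \<and> i j + 1 \<le> n"
    proof (intro allI impI)
      fix j assume j: "j < Suc k"
      show "a \<le> i j \<and> i j + 1 \<le> n"
      proof (cases j)
        case 0 then show ?thesis using xa s3 unfolding i_def by auto
      next
        case (Suc j') then show ?thesis using c(2) j xa unfolding i_def by fastforce
      qed
    qed
    moreover have "U (Suc k) i = {x, x+1} \<union> U k c" unfolding U_Suc i_def by simp
    ultimately show ?thesis using c(3) unfolding \<sigma>'_def by blast
  qed
qed

lemma facets_gen: assumes "\<forall>F\<in>G. finite F \<and> card F = c"
  shows "facets (generated_complex G) = G"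
proof
  show "facets (generated_complex G) \<subseteq> G"
  proof
    fix F assume "F \<in> facets (generated_complex G)"
    then have F: "F \<in> generated_complex G" "\<forall>H\<in>generated_complex G. F \<subseteq> H \<longrightarrow> H = F"
      unfolding facets_def by auto
    then obtain H where "H \<in> G" "F \<subseteq> H" unfolding generated_complex_def by auto
    moreover then have "H \<in> generated_complex G" unfolding generated_complex_def by auto
    ultimately show "F \<in> G" using F by auto
  qed
next
  show "G \<subseteq> facets (generated_complex G)"
  proof
    fix F assume F: "F \<in> G"
    have "H = F" if h: "H \<in> generated_complex G" "F \<subseteq> H" for H
    proof -
      obtain H' where H': "H' \<in> G" "H \<subseteq> H'" using h(1) unfolding generated_complex_def by blast
      have "F = H'" using F H' h assms by (metis card_subset_eq order_trans)
      then show ?thesis using H' h by auto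
    qed
    moreover have "F \<in> generated_complex G" using F unfolding generated_complex_def by auto
    ultimately show "F \<in> facets (generated_complex G)" unfolding facets_def by auto
  qed
qed

lemma push:
  assumes k1: "k \<ge> 1" and SF: "S \<subseteq> Fam k n" and fin: "finite \<sigma>" and cs: "card \<sigma> < k"
  shows "1 \<le> i 0 \<Longrightarrow> i (k-1) + 1 \<le> n \<Longrightarrow> chn k i \<Longrightarrow> \<sigma> \<subseteq> U k i \<Longrightarrow>
    (\<exists>s\<in>S. leq_p (U k i) s) \<Longrightarrow>
    \<exists>F \<in> order_ideal (Fam k n) S. F \<notin> order_ideal (Fam k n) (shift_down S) \<and> \<sigma> \<subseteq> F"
proof (induction "k*n - (\<Sum>j<k. i j)" arbitrary: i rule: less_induct)
  case less
  have UF: "U k i \<in> Fam k n" using Fam_iff less.prems by auto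
  show ?case
  proof (cases "U k i \<in> order_ideal (Fam k n) (shift_down S)")
    case False then show ?thesis using UF less.prems unfolding order_ideal_def by auto
  next
    case True
    then obtain s' where s': "s' \<in> shift_down S" "leq_p (U k i) s'" unfolding order_ideal_def by auto
    then obtain s where s: "s \<in> S" "Min s > 1" "s' = (\<lambda>a. a-1) ` s" unfolding shift_down_def by auto
    then obtain t where t: "1 \<le> t 0" "t (k-1)+1 \<le> n" "chn k t" "s = U k t" using SF Fam_iff by blast
    have "t 0 \<in> s" using t k1 unfolding U_def by auto
    then have t0: "t 0 \<ge> 2" using s(2) Min_le[of s "t 0"] finite_U t(4) by fastforce
    have tge: "\<forall>j<k. 2 \<le> t j \<and> t j + 1 \<le> n"
    proof (intro allI impI)
      fix j assume j: "j < k"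
      have "t 0 + 2*(j - 0) \<le> t j" using chn_mono[OF t(3), of 0 j] j by simp
      moreover have "t j + 2*(k-1-j) \<le> t (k-1)" using chn_mono[OF t(3), of j "k-1"] j by simp
      ultimately show "2 \<le> t j \<and> t j + 1 \<le> n" using t0 t(2) by linarith
    qed
    have t1: "\<forall>j<k. 1 \<le> t j" using tge by auto
    have s'eq: "s' = U k (\<lambda>j. t j - 1)" using shift_U[OF t1] s(3) t(4) by simp
    have chn': "chn k (\<lambda>j. t j - 1)" using chn_shift[OF t(3) t1] .
    have lt: "\<forall>j<k. i j + 1 \<le> t j"
      using leq_U[OF less.prems(3) chn'] s'(2) s'eq tge by fastforce
    obtain j0 where j0: "j0 < k" "i j0 \<notin> \<sigma>" "i j0 + 1 \<notin> \<sigma>"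
      using free_pair[OF less.prems(3) fin cs] by blast
    define P where "P r \<longleftrightarrow> j0 \<le> r \<and> (r+1 = k \<or> i r + 2 \<noteq> i (r+1))" for r
    have Pk: "P (k-1)" unfolding P_def using j0 k1 by auto
    define r where "r = (LEAST r. P r)"
    have Pr: "P r" unfolding r_def using Pk by (rule LeastI)
    have rk: "r < k" using Least_le[of P "k-1", OF Pk] k1 unfolding r_def[symmetric] by simp
    have blk: "i (j+1) = i j + 2" if "j0 \<le> j" "j < r" for j
    proof -
      have "\<not> P j" using not_less_Least[of j P] that unfolding r_def by simp
      moreover have "j + 1 \<noteq> k" using that rk by simp
      ultimately show ?thesis using that unfolding P_def by simp
    qed
    have rend: "i r + 3 \<le> i (r+1)" if "r+1 < k"
    proof -
      have "i r + 2 \<noteq> i (r+1)" using Pr that unfolding P_def by simp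
      moreover have "i r + 2 \<le> i (r+1)" using less.prems(3) that unfolding chn_def by simp
      ultimately show ?thesis by simp
    qed
    have j0r: "j0 \<le> r" using Pr unfolding P_def by simp
    define i' where "i' j = (if j0 \<le> j \<and> j \<le> r then i j + 1 else i j)" for j
    have i'le: "\<forall>j<k. i j \<le> i' j \<and> i' j \<le> t j" using lt unfolding i'_def by auto
    have i'n: "\<forall>j<k. i' j \<le> n" using i'le tge by fastforce
    have chi': "chn k i'" unfolding chn_def
    proof (intro allI impI)
      fix j assume j: "j + 1 < k"
      have c: "i j + 2 \<le> i (j+1)" using less.prems(3) j unfolding chn_def by simp
      show "i' j + 2 \<le> i' (j+1)"
      proof (cases "j0 \<le> j \<and> j \<le> r")
        case True
        show ?thesis
        proof (cases "j = r")
          case True then show ?thesis using rend j c unfolding i'_def by auto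
        next
          case False then show ?thesis using \<open>j0 \<le> j \<and> j \<le> r\<close> c unfolding i'_def by auto
        qed
      next
        case False then show ?thesis using c unfolding i'_def by auto
      qed
    qed
    show ?thesis
    proof (rule less.hyps[of i'])
      have "(\<Sum>j<k. i j) < (\<Sum>j<k. i' j)"
        by (rule sum_strict_mono_ex1) (use i'le j0 j0r in \<open>auto simp: i'_def intro!: bexI[of _ j0]\<close>)
      moreover have "(\<Sum>j<k. i' j) \<le> k * n"
        using sum_bounded_above[of "{..<k}" i' n] i'n by simp
      ultimately show "k * n - (\<Sum>j<k. i' j) < k * n - (\<Sum>j<k. i j)" by linarith
      show "1 \<le> i' 0" using less.prems(1) i'le k1 by force
      show "i' (k - 1) + 1 \<le> n" using i'le tge k1 by (metis add_le_mono1 diff_less less_one not_le order_trans zero_less_one)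
      show "chn k i'" by (rule chi')
      show "\<exists>s\<in>S. leq_p (U k i') s" using leq_U[OF chi' t(3)] i'le s(1) t(4) by auto
      show "\<sigma> \<subseteq> U k i'"
      proof
        fix x assume x: "x \<in> \<sigma>"
        then obtain j where j: "j < k" "x = i j \<or> x = i j + 1" using less.prems(4) unfolding U_def by auto
        show "x \<in> U k i'"
        proof (cases "j0 \<le> j \<and> j \<le> r")
          case False then show ?thesis using j unfolding U_def i'_def by auto
        next
          case True
          show ?thesis
          proof (cases "x = i j + 1")
            case True then show ?thesis using j \<open>j0 \<le> j \<and> j \<le> r\<close> unfolding U_def i'_def by auto
          next
            case False
            then have xj: "x = i j" using j by simp
            then have "j \<noteq> j0" using j0 x by auto
            then have jj: "j0 \<le> j - 1" "j - 1 < r" "j - 1 < k" "j = (j-1)+1"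
              using \<open>j0 \<le> j \<and> j \<le> r\<close> rk by auto
            have "i j = i (j-1) + 2" using blk[of "j-1"] jj by simp
            then have "x = i' (j-1) + 1" using xj jj unfolding i'_def by simp
            then show ?thesis using jj unfolding U_def by blast
          qed
        qed
      qed
    qed
  qed
qed

lemma Fam_card: "F \<in> Fam k n \<Longrightarrow> finite F \<and> card F = 2*k"
  using Fam_iff card_U finite_U by auto

theorem lemma3p14:
  fixes k n :: nat and S :: "nat set set"
  assumes "k \<ge> 1" and "n \<ge> 2 * k"
    and "is_antichain (Fam k n) S"
    and "{1..2} \<union> {n - 2 * k + 3..n} \<in> S"
  shows "neighborly (k - 1) (B_sub k n S) {1..n}"
  unfolding neighborly_def
proof (intro allI impI)
  fix \<sigma> :: "nat set" assume \<sigma>: "\<sigma> \<subseteq> {1..n} \<and> card \<sigma> \<le> k - 1"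
  have SF: "S \<subseteq> Fam k n" using assms(3) unfolding is_antichain_def by simp
  have fin: "finite \<sigma>" using \<sigma> finite_subset by blast
  have id1: "facets (B_cpx k n X) = order_ideal (Fam k n) X" for X
    unfolding B_cpx_def by (rule facets_gen[where c="2*k"]) (auto simp: order_ideal_def Fam_card)
  have BS: "B_sub k n S = generated_complex {F \<in> order_ideal (Fam k n) S. F \<notin> order_ideal (Fam k n) (shift_down S)}"
    unfolding B_sub_def id1 ..
  obtain k' where k': "k = Suc k'" using assms(1) by (cases k) auto
  have s1: "\<sigma> - {1,2} \<subseteq> {3..n}" using \<sigma> by auto
  have "card (\<sigma> - {1,2}) \<le> card \<sigma>" using fin by (intro card_mono) auto
  then have s2: "card (\<sigma> - {1,2}) \<le> k'" using \<sigma> k' by simp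
  have s3: "3 + 2*k' \<le> n + 1" using assms(2) k' by simp
  obtain c where c: "chn k' c" "\<forall>j<k'. 3 \<le> c j \<and> c j + 1 \<le> n" "\<sigma> - {1,2} \<subseteq> U k' c"
    using cover[OF s1 s2 s3] by blast
  define i where "i j = (if j = 0 then 1 else c (j - 1))" for j
  have Ui: "U k i = {1,2} \<union> U k' c" unfolding k' U_Suc i_def by (simp add: numeral_2_eq_2)
  have chi: "chn k i" unfolding chn_def
  proof (intro allI impI)
    fix j assume j: "j + 1 < k"
    show "i j + 2 \<le> i (j+1)"
    proof (cases j)
      case 0 then show ?thesis using c(2) j k' unfolding i_def by auto
    next
      case (Suc j') then show ?thesis using c(1) j k' unfolding i_def chn_def by auto
    qed
  qed
  have i1: "i (k-1) + 1 \<le> n"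
  proof (cases k')
    case 0 then show ?thesis using k' assms(2) unfolding i_def by simp
  next
    case (Suc m) then show ?thesis using k' c(2) unfolding i_def by simp
  qed
  have i0: "1 \<le> i 0" unfolding i_def by simp
  have scov: "\<sigma> \<subseteq> U k i" using c(3) Ui by auto
  define t where "t j = (if j = 0 then 1 else n - 2*k + 1 + 2*j)" for j
  have cht: "chn k t" unfolding chn_def t_def using assms(2) by auto
  have Ut: "U k t = {1..2} \<union> {n - 2 * k + 3..n}"
  proof -
    have "(\<lambda>j. t (Suc j)) = (\<lambda>j. (n - 2*k + 3) + 2*j)" unfolding t_def using assms(2) by auto
    moreover have "U k t = {t 0, t 0 + 1} \<union> U k' (\<lambda>j. t (Suc j))" using U_Suc k' by simp
    ultimately have A: "U k t = {t 0, t 0 + 1} \<union> {n - 2*k + 3..<(n - 2*k + 3) + 2*k'}"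
      using tile[of k' "n - 2*k + 3"] by simp
    have "t 0 = 1" unfolding t_def by simp
    then have "U k t = {1,2} \<union> {n - 2*k + 3..<(n - 2*k + 3) + 2*k'}" unfolding A by (simp only: one_add_one)
    also have "(n - 2*k + 3) + 2*k' = n + 1" using assms(2) k' by simp
    finally have E: "U k t = {1, 2} \<union> {n - 2 * k + 3..<n + 1}" .
    have E1: "{1..2::nat} = {1,2}" by auto
    have E2: "{n - 2 * k + 3..<n + 1} = {n - 2 * k + 3..n}" by (simp add: atLeastLessThanSuc_atLeastAtMost)
    show ?thesis unfolding E E1 E2 ..
  qed
  have le: "\<forall>j<k. i j \<le> t j"
  proof (intro allI impI)
    fix j assume j: "j < k"
    show "i j \<le> t j"
    proof (cases "j = 0")
      case True then show ?thesis unfolding i_def t_def by simp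
    next
      case False
      have "i j + 2*(k-1-j) \<le> i (k-1)" using chn_mono[OF chi, of j "k-1"] j by simp
      then have "i j + 2*(k-1-j) + 1 \<le> n" using i1 by linarith
      then have "i j \<le> n - 2*k + 1 + 2*j" using False j assms(2) by linarith
      then show ?thesis using False unfolding t_def by simp
    qed
  qed
  have ex: "\<exists>s\<in>S. leq_p (U k i) s" using assms(4) leq_U[OF chi cht] le Ut by auto
  have cs: "card \<sigma> < k" using \<sigma> assms(1) by linarith
  obtain F where F: "F \<in> order_ideal (Fam k n) S" "F \<notin> order_ideal (Fam k n) (shift_down S)" "\<sigma> \<subseteq> F"
    using push[OF assms(1) SF fin cs i0 i1 chi scov ex] by blast
  show "\<sigma> \<in> B_sub k n S" unfolding BS generated_complex_def using F by blast
qed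

end
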